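(* For every positive integer $n$, $$\vartheta_2\!\left(\sum_{k=1}^{n} \frac{2^k}{k}\right) \geq s_2(n)$$ and, more strongly, $$\vartheta_2\!\left(\sum_{k=1}^{n} \frac{2^k}{k}\right) \geq n - \left\lfloor \frac{\log n}{\log 2} \right\rfloor.$$
   Context: $\vartheta_2$ denotes the $2$-adic valuation, extended to nonzero rational numbers by $\vartheta_2(a/b) = \vartheta_2(a) - \vartheta_2(b)$. $s_2(n)$ denotes the sum of the binary digits of $n$. $\lfloor x \rfloor$ is the integer part of $x$. *)

theory Defs
  imports Complex_Main "HOL-Computational_Algebra.Primes"
begin

text \<open>2-adic valuation of a nonzero rational a/b (in lowest terms): v2(a) - v2(b).
  (For q = 0 the value is 0 by this definition; it is never used at 0 here.)\<close>
definition vartheta2 :: "rat \<Rightarrow> int" where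
  "vartheta2 q = (let (a, b) = quotient_of q in
      int (multiplicity (2::int) a) - int (multiplicity (2::int) b))"

fun s2 :: "nat \<Rightarrow> nat" where
  "s2 n = (if n = 0 then 0 else n mod 2 + s2 (n div 2))"

end

theory Submission
  imports Defs
begin


definition dv :: "nat \<Rightarrow> rat \<Rightarrow> bool" where
  "dv c q \<longleftrightarrow> (\<exists>a b::int. odd b \<and> q = 2^c * of_int a / of_int b)"

lemma dv_add: "dv c p \<Longrightarrow> dv c q \<Longrightarrow> dv c (p + q)"
proof -
  assume "dv c p" "dv c q"
  then obtain a b a' b' :: int where h: "odd b" "p = 2^c * of_int a / of_int b" "odd b'" "q = 2^c * of_int a' / of_int b'"
    unfolding dv_def by blast
  have "b \<noteq> 0" "b' \<noteq> 0" using h by auto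
  then have "p + q = 2^c * of_int (a*b' + a'*b) / of_int (b*b')"
    using h by (simp add: field_simps)
  moreover have "odd (b*b')" using h by simp
  ultimately show ?thesis unfolding dv_def by blast
qed

lemma dv_0: "dv c 0"
  unfolding dv_def by (rule exI[of _ 0], rule exI[of _ 1]) simp

lemma dv_sum: "(\<And>i. i \<in> A \<Longrightarrow> dv c (f i)) \<Longrightarrow> dv c (sum f A)"
proof (induction A rule: infinite_finite_induct)
  case (infinite A) then show ?case by (simp add: dv_0)
next
  case empty then show ?case by (simp add: dv_0)
next
  case (insert x F) then show ?case by (simp add: dv_add)
qed

lemma dv_mult_int: "dv c q \<Longrightarrow> dv c (of_int z * q)"
  unfolding dv_def
  by (metis (no_types, opaque_lifting) mult.left_commute of_int_mult times_divide_eq_right)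

lemma dv_half: "dv (Suc c) q \<Longrightarrow> dv c (q / 2)"
  unfolding dv_def by (auto simp: field_simps)

lemma dv_mono: "dv c q \<Longrightarrow> d \<le> c \<Longrightarrow> dv d q"
proof -
  assume "dv c q" "d \<le> c"
  then obtain a b :: int where h: "odd b" "q = 2^c * of_int a / of_int b" unfolding dv_def by blast
  have "(2::rat)^c = 2^d * of_int (2^(c-d))" using \<open>d \<le> c\<close> by (simp flip: power_add)
  then have "q = 2^d * of_int (2^(c-d) * a) / of_int b" using h by simp
  then show ?thesis using h unfolding dv_def by blast
qed

lemma dv_vartheta2:
  assumes "dv c q" "q \<noteq> 0"
  shows "vartheta2 q \<ge> int c"
proof -
  obtain a b :: int where h: "odd b" "q = 2^c * of_int a / of_int b" using assms unfolding dv_def by blast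
  obtain p d where pd: "quotient_of q = (p, d)" by (cases "quotient_of q")
  have d0: "d > 0" using quotient_of_denom_pos[OF pd] .
  have qe: "q = of_int p / of_int d" using quotient_of_div[OF pd] .
  have p0: "p \<noteq> 0" using assms(2) qe by auto
  have b0: "b \<noteq> 0" using h by auto
  have a0: "a \<noteq> 0" using assms(2) h by auto
  have "of_int p * of_int b = (2::rat)^c * of_int a * of_int d"
    using h qe d0 b0 by (simp add: field_simps)
  then have eq: "p * b = 2^c * a * d"
    by (metis (mono_tags) of_int_eq_iff of_int_mult of_int_numeral of_int_power)
  define e where "e = multiplicity (2::int) d"
  have "2^e dvd d" unfolding e_def by (rule multiplicity_dvd)
  then have "2^(c+e) dvd p * b" unfolding eq by (simp add: power_add mult_dvd_mono)
  moreover have "coprime ((2::int)^(c+e)) b" using h by simp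
  ultimately have "2^(c+e) dvd p" using coprime_dvd_mult_left_iff by blast
  then have "multiplicity 2 p \<ge> c + e" using p0 by (intro multiplicity_geI) auto
  then show ?thesis unfolding vartheta2_def pd e_def by simp
qed



definition F :: "nat \<Rightarrow> rat" where
  "F N = (\<Sum>j\<le>N. (-1)^j * of_nat ((N-j) choose j) * 4^(N-j))"

lemma F_rec: "F (Suc (Suc N)) = 4 * F (Suc N) - 4 * F N"
proof -
  define A where "A = (\<Sum>i\<le>Suc N. (-1::rat)^i * of_nat ((N-i) choose i) * 4^(Suc N-i))"
  define B where "B = (\<Sum>i\<le>Suc N. (-1::rat)^i * of_nat ((N-i) choose Suc i) * 4^(Suc N-i))"
  have cs: "(Suc N - i) choose Suc i = ((N-i) choose i) + ((N-i) choose Suc i)" if "i \<le> Suc N" for i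
  proof (cases "i \<le> N")
    case True then have "Suc N - i = Suc (N-i)" by simp
    then show ?thesis by simp
  next
    case False then have "i = Suc N" using that by simp
    then show ?thesis by simp
  qed
  have "F (Suc (Suc N)) = 4^(Suc (Suc N)) + (\<Sum>i\<le>Suc N. (-1::rat)^(Suc i) * of_nat ((Suc N - i) choose Suc i) * 4^(Suc N-i))"
    unfolding F_def by (subst sum.atMost_Suc_shift) simp
  also have "(\<Sum>i\<le>Suc N. (-1::rat)^(Suc i) * of_nat ((Suc N - i) choose Suc i) * 4^(Suc N-i)) = - A - B"
    unfolding A_def B_def by (simp add: cs sum_negf[symmetric] sum.distrib[symmetric] algebra_simps)
  also have "A = 4 * F N"
  proof -
    have "A = (\<Sum>i\<le>N. (-1::rat)^i * of_nat ((N-i) choose i) * 4^(Suc N-i))"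
      unfolding A_def by simp
    also have "\<dots> = (\<Sum>i\<le>N. 4 * ((-1::rat)^i * of_nat ((N-i) choose i) * 4^(N-i)))"
      by (rule sum.cong) (auto simp: Suc_diff_le)
    finally show ?thesis unfolding F_def by (simp add: sum_distrib_left)
  qed
  also have "4 * F (Suc N) = 4^(Suc (Suc N)) - B"
  proof -
    have "F (Suc N) = 4^(Suc N) + (\<Sum>i\<le>N. (-1::rat)^(Suc i) * of_nat ((N - i) choose Suc i) * 4^(N-i))"
      unfolding F_def by (subst sum.atMost_Suc_shift) simp
    moreover have "B = (\<Sum>i\<le>N. (-1::rat)^i * of_nat ((N-i) choose Suc i) * 4^(Suc N-i))"
      unfolding B_def by simp
    moreover have "\<dots> = (\<Sum>i\<le>N. 4 * ((-1::rat)^i * of_nat ((N-i) choose Suc i) * 4^(N-i)))"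
      by (rule sum.cong) (auto simp: Suc_diff_le)
    ultimately show ?thesis by (simp add: sum_distrib_left sum_negf)
  qed
  ultimately show ?thesis by simp
qed

lemma F_closed: "F N = of_nat (N+1) * 2^N"
proof -
  have "F N = of_nat (N+1) * 2^N \<and> F (Suc N) = of_nat (N+2) * 2^(Suc N)"
  proof (induction N)
    case 0 then show ?case by (simp add: F_def)
  next
    case (Suc N)
    then show ?case by (simp add: F_rec algebra_simps)
  qed
  then show ?thesis by simp
qed



definition V :: "nat \<Rightarrow> rat" where
  "V N = (\<Sum>j<N. (-1)^j * of_nat ((N-j) choose j) * 4^(N-j) / of_nat (N-j))"

lemma V_term: "j < N \<Longrightarrow> of_nat N * (of_nat ((N-j) choose j) / of_nat (N-j)) =
   (of_nat ((N-j) choose j) + (if j = 0 then 0 else of_nat ((N-j-1) choose (j-1))) :: rat)"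
proof (cases j)
  case 0 assume "j < N" then show ?thesis using 0 by simp
next
  case (Suc k) assume jN: "j < N"
  obtain m where m: "N - j = Suc m" using jN by (metis Suc_diff_Suc)
  have e: "j * ((N-j) choose j) = (N-j) * ((N-j-1) choose (j-1))"
    using Suc_times_binomial[of k m] m Suc by simp
  have "(N-j) * (((N-j) choose j) + ((N-j-1) choose (j-1))) = N * ((N-j) choose j)"
    using e jN by (metis add_mult_distrib add_mult_distrib2 le_add_diff_inverse2 less_imp_le_nat)
  then have "of_nat (N-j) * (of_nat ((N-j) choose j) + of_nat ((N-j-1) choose (j-1))) = (of_nat N * of_nat ((N-j) choose j) :: rat)"
    by (metis of_nat_add of_nat_mult)
  moreover have nz: "of_nat (N-j) \<noteq> (0::rat)" using jN by simp
  ultimately show ?thesis using Suc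
    by (simp add: field_simps)
qed

lemma V_closed: "N \<ge> 1 \<Longrightarrow> V N = 2^(Suc N) / of_nat N"
proof -
  assume N1: "N \<ge> 1"
  have "of_nat N * V N = (\<Sum>j<N. (-1)^j * (of_nat ((N-j) choose j) + (if j = 0 then 0 else of_nat ((N-j-1) choose (j-1)))) * 4^(N-j))"
    unfolding V_def sum_distrib_left
    by (rule sum.cong) (simp_all add: V_term[symmetric] algebra_simps)
  also have "\<dots> = (\<Sum>j<N. (-1)^j * of_nat ((N-j) choose j) * 4^(N-j)) +
      (\<Sum>j<N. (-1)^j * (if j = 0 then 0 else of_nat ((N-j-1) choose (j-1))) * 4^(N-j))"
    by (simp add: sum.distrib[symmetric] algebra_simps)
  also have "(\<Sum>j<N. (-1)^j * of_nat ((N-j) choose j) * (4::rat)^(N-j)) = F N"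
  proof -
    obtain M where "N = Suc M" using N1 by (cases N) auto
    then show ?thesis unfolding F_def by (simp add: lessThan_Suc_atMost[symmetric])
  qed
  also have "(\<Sum>j<N. (-1)^j * (if j = 0 then 0 else of_nat ((N-j-1) choose (j-1))) * (4::rat)^(N-j))
     = (if N = 1 then 0 else - 4 * F (N - 2))"
  proof -
    obtain M where M: "N = Suc M" using N1 by (cases N) auto
    have "(\<Sum>j<N. (-1)^j * (if j = 0 then 0 else of_nat ((N-j-1) choose (j-1))) * (4::rat)^(N-j))
        = (\<Sum>i<M. - ((-1)^i * of_nat ((M-i-1) choose i) * 4^(M-i)))"
      unfolding M by (subst sum.lessThan_Suc_shift) simp
    also have "\<dots> = (if N = 1 then 0 else - 4 * F (N - 2))"
    proof (cases M)
      case 0 then show ?thesis using M by simp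
    next
      case (Suc K)
      have "(\<Sum>i<M. - ((-1)^i * of_nat ((M-i-1) choose i) * (4::rat)^(M-i)))
          = (\<Sum>i\<le>K. - 4 * ((-1)^i * of_nat ((K-i) choose i) * 4^(K-i)))"
        unfolding Suc lessThan_Suc_atMost
        by (rule sum.cong) (auto simp: Suc_diff_le)
      then show ?thesis using M Suc unfolding F_def by (simp add: sum_distrib_left)
    qed
    finally show ?thesis .
  qed
  finally have "of_nat N * V N = F N + (if N = 1 then 0 else - 4 * F (N - 2))" .
  moreover have "F N + (if N = 1 then 0 else - 4 * F (N - 2)) = 2^(Suc N)"
  proof (cases "N = 1")
    case True then show ?thesis by (simp add: F_closed)
  next
    case False
    then obtain K where K: "N = Suc (Suc K)" using N1 by (metis One_nat_def Suc_le_D not0_implies_Suc)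
    show ?thesis unfolding K by (simp add: F_closed algebra_simps)
  qed
  ultimately show ?thesis using N1 by (simp add: field_simps)
qed

definition G :: "nat \<Rightarrow> rat" where
  "G N = (\<Sum>j<N. (-1)^j * of_nat ((N-j-1) choose j) * 4^(N-j) / of_nat (N-j))"

lemma G_step: "G (Suc N) = G N + V (Suc N)"
proof -
  have "V (Suc N) - G (Suc N) = (\<Sum>j<Suc N. (-1)^j * (of_nat ((Suc N-j) choose j) - of_nat ((N-j) choose j)) * 4^(Suc N-j) / of_nat (Suc N-j))"
    unfolding V_def G_def sum_subtractf[symmetric]
    by (rule sum.cong) (simp_all add: diff_divide_distrib right_diff_distrib left_diff_distrib)
  also have "\<dots> = (\<Sum>i<N. - ((-1)^i * of_nat ((N-i-1) choose i) * 4^(N-i) / of_nat (N-i)))"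
  proof -
    have h: "\<And>i. i < N \<Longrightarrow> of_nat (N - i choose Suc i) - of_nat (N - Suc i choose Suc i) = (of_nat (N - Suc i choose i) :: rat)"
    proof -
      fix i assume iN: "i < N"
      obtain m where m: "N - i = Suc m" using iN by (metis Suc_diff_Suc)
      have "N - Suc i = m" using m by simp
      then show "?thesis i" using m by simp
    qed
    show ?thesis
      by (subst sum.lessThan_Suc_shift, simp, intro sum.cong refl, simp add: h)
  qed
  also have "\<dots> = - G N" unfolding G_def by (simp add: sum_negf)
  finally show ?thesis by simp
qed

definition T :: "nat \<Rightarrow> rat" where "T N = (\<Sum>k=1..N. 2 ^ k / of_nat k)"

lemma G_T: "G N = 2 * T N"
proof (induction N)
  case 0 then show ?case by (simp add: G_def T_def)
next
  case (Suc N)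
  show ?case unfolding G_step Suc T_def by (simp add: V_closed algebra_simps)
qed



lemma odd_decomp: "(m::nat) > 0 \<Longrightarrow> \<exists>v w. m = 2^v * w \<and> odd w"
proof (induction m rule: less_induct)
  case (less m)
  show ?case
  proof (cases "even m")
    case True
    then obtain k where k: "m = 2 * k" by blast
    then have "k < m" "k > 0" using less.prems by auto
    then obtain v w where "k = 2^v * w" "odd w" using less.IH by blast
    then show ?thesis using k by (intro exI[of _ "Suc v"] exI[of _ w]) auto
  next
    case False then show ?thesis by (intro exI[of _ 0] exI[of _ m]) auto
  qed
qed

lemma dv_term:
  assumes "1 \<le> m" "m \<le> N" "N < 2^(Suc L)" "N + 1 \<le> 2 * m"
  shows "dv (N + 1 - L) (4^m / of_nat m)"
proof -
  obtain v w where vo: "m = 2^v * w" "odd w" using odd_decomp[of m] assms by auto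
  have "w \<ge> 1" using vo by (cases w) auto
  then have "2^v \<le> m" using vo by simp
  then have "(2::nat)^v < 2^(Suc L)" using assms by linarith
  then have vL: "v \<le> L" using power_less_imp_less_exp[of "2::nat" v "Suc L"] by simp
  have vm: "v \<le> 2 * m" using \<open>2^v \<le> m\<close> less_exp[of v] by linarith
  have w0: "(of_int (int w) :: rat) \<noteq> 0" using odd_pos[OF vo(2)] by simp
  have "(4::rat)^m = 2^(2*m)" by (simp add: power_mult)
  also have "\<dots> = 2^(2*m - v) * 2^v" using vm by (simp flip: power_add)
  finally have e4: "(4::rat)^m = 2^(2*m - v) * 2^v" .
  have em: "(of_nat m :: rat) = 2^v * of_int (int w)" using vo by simp
  have "(4::rat)^m / of_nat m = 2^(2*m - v) * of_int 1 / of_int (int w)"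
    unfolding e4 em using w0 by simp
  then have "dv (2*m - v) (4^m / of_nat m)" unfolding dv_def
    by (intro exI[of _ 1] exI[of _ "int w"] conjI) (simp_all add: vo(2))
  moreover have "N + 1 - L \<le> 2*m - v" using assms vL by linarith
  ultimately show ?thesis by (rule dv_mono)
qed

lemma dv_G: assumes "N < 2^(Suc L)" shows "dv (N + 1 - L) (G N)"
  unfolding G_def
proof (rule dv_sum)
  fix j assume "j \<in> {..<N}"
  then have jN: "j < N" by simp
  show "dv (N + 1 - L) ((- 1) ^ j * of_nat (N - j - 1 choose j) * 4 ^ (N - j) / of_nat (N - j))"
  proof (cases "N - j - 1 < j")
    case True then show ?thesis by (simp add: binomial_eq_0 dv_0)
  next
    case False
    have "dv (N + 1 - L) (4^(N-j) / of_nat (N-j))"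
      by (rule dv_term) (use jN False assms in auto)
    then have "dv (N + 1 - L) (of_int ((- 1) ^ j * int (N - j - 1 choose j)) * (4^(N-j) / of_nat (N-j)))"
      by (rule dv_mult_int)
    then show ?thesis by simp
  qed
qed

lemma T_pos: "N \<ge> 1 \<Longrightarrow> T N > 0"
  unfolding T_def by (rule sum_pos) auto

declare s2.simps[simp del]

lemma s2_pos: "n \<noteq> 0 \<Longrightarrow> s2 n = n mod 2 + s2 (n div 2)"
  by (subst s2.simps) simp

lemma s2_le: "s2 n \<le> n"
proof (induction n rule: less_induct)
  case (less n) show ?case
  proof (cases "n = 0")
    case True then show ?thesis by (subst s2.simps) simp
  next
    case False
    then have "s2 (n div 2) \<le> n div 2" by (intro less.IH) simp
    then show ?thesis using s2_pos[OF False] by presburger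
  qed
qed

lemma s2_L: "2^L \<le> n \<Longrightarrow> s2 n + L \<le> n"
proof (induction L arbitrary: n)
  case 0 then show ?case using s2_le by simp
next
  case (Suc L)
  have "2 * 2^L \<le> n" using Suc.prems by simp
  moreover have "(1::nat) \<le> 2^L" by simp
  ultimately have h: "2^L \<le> n div 2" "n \<noteq> 0" "n div 2 \<ge> 1" by presburger+
  have "s2 (n div 2) + L \<le> n div 2" by (rule Suc.IH[OF h(1)])
  then show ?case using s2_pos[OF h(2)] h by presburger
qed



theorem theorem2:
  fixes n :: nat
  assumes "n \<ge> 1"
  shows "vartheta2 (\<Sum>k=1..n. 2 ^ k / of_nat k) \<ge> int (s2 n)
     \<and> vartheta2 (\<Sum>k=1..n. 2 ^ k / of_nat k) \<ge> int n - \<lfloor>ln (real n) / ln 2\<rfloor>"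
proof -
  define k where "k = \<lfloor>log 2 (real n)\<rfloor>"
  have n0: "real n > 0" using assms by simp
  have k0: "k \<ge> 0" unfolding k_def using assms by simp
  define L where "L = nat k"
  have kL: "k = int L" using k0 unfolding L_def by simp
  have "2 powr (real_of_int k) \<le> real n \<and> real n < 2 powr (real_of_int (k + 1))"
    using floor_log_eq_powr_iff[OF n0, of 2 k] k_def by simp
  moreover have "(2::real) powr (real_of_int (int L + 1)) = 2 ^ Suc L"
    using powr_realpow[of 2 "Suc L"] by (simp add: add.commute)
  ultimately have "2 ^ L \<le> real n \<and> real n < 2 ^ Suc L"
    unfolding kL by (simp add: powr_realpow)
  then have r: "real (2^L) \<le> real n" "real n < real (2^Suc L)" by simp_all
  have LN: "2^L \<le> n" "n < 2^Suc L" using r by (simp_all only: of_nat_le_iff of_nat_less_iff)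
  have fl: "\<lfloor>ln (real n) / ln 2\<rfloor> = int L" using kL unfolding k_def by (simp add: log_def)
  have LleN: "L \<le> n" using LN(1) less_exp[of L] by linarith
  have "dv (n + 1 - L) (G n)" by (rule dv_G[OF LN(2)])
  then have "dv (Suc (n - L)) (2 * T n)" using LleN G_T by (simp add: Suc_diff_le)
  then have "dv (n - L) (2 * T n / 2)" by (rule dv_half)
  then have "dv (n - L) (T n)" by simp
  then have v: "vartheta2 (T n) \<ge> int (n - L)" using T_pos[OF assms] by (intro dv_vartheta2) auto
  have s: "s2 n + L \<le> n" by (rule s2_L[OF LN(1)])
  show ?thesis using v s LleN fl unfolding T_def by simp
qed


end
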